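(* Let $M$ be a valued field and $c=(c_0,\dots,c_{n-1})$ a tuple of elements of $\mathrm{Cut}$. For every invertible upper triangular matrix $a=(a_{i,j})\in B_n$, we have $a\in\mathrm{Stab}(\Lambda_c)$ if and only if $a_{i,i}\in\mathcal{O}_{\Delta_{c_i}}^\times$ for all $i<n$, and $a_{i,j}\in(I_{c_i}:I_{c_j})$ for all $i<j<n$.
   Context: $\mathcal{O}$ is the valuation ring, $v$ the valuation, $\Gamma$ the value group. $(C_c)_{c\in\mathrm{Cut}}$ is a fixed (ind-)definable family of cuts (upward closed subsets) of $\Gamma$ such that every $M$-definable cut equals $C_c$ for a unique $c$; $I_c=\{x\in K:v(x)\in C_c\}$ and $\Delta_c=\{\gamma\in\Gamma:\gamma+C_c=C_c\}$, a convex subgroup. For a convex subgroup $\Delta$, $\mathcal{O}_\Delta=\{x\in K:v(x)\in\Delta\}$ and $\mathcal{O}_\Delta^\times=\{x: v(x)\in\Delta\}$ is its unit group. For $\mathcal{O}$-submodules $I,J$ of $K$, $(I:J)=\{x\in K:xJ\subseteq I\}$. $\Lambda_c=\sum_iI_{c_i}e_i\subseteq K^n$ with $(e_i)$ the standard basis; $B_n$ acts on subsets of $K^n$ and $\mathrm{Stab}(\Lambda_c)=\{a\in B_n:a\Lambda_c=\Lambda_c\}$. *)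

theory Defs
  imports Main
begin

text \<open>The valuation is
  given on nonzero elements; v(0) = infinity is handled by treating 0 separately.
  The value group Gamma is the whole type 'g (v is onto on nonzero elements).\<close>
definition valuation :: "('k::field \<Rightarrow> 'g::linordered_ab_group_add) \<Rightarrow> bool" where
  "valuation v \<longleftrightarrow>
     (\<forall>x y. x \<noteq> 0 \<longrightarrow> y \<noteq> 0 \<longrightarrow> v (x * y) = v x + v y) \<and>
     (\<forall>x y. x \<noteq> 0 \<longrightarrow> y \<noteq> 0 \<longrightarrow> x + y \<noteq> 0 \<longrightarrow> min (v x) (v y) \<le> v (x + y)) \<and>
     (\<forall>\<gamma>. \<exists>x. x \<noteq> 0 \<and> v x = \<gamma>)"

definition is_cut :: "'g::linordered_ab_group_add set \<Rightarrow> bool" where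
  "is_cut C \<longleftrightarrow> (\<forall>\<gamma> \<delta>. \<gamma> \<in> C \<longrightarrow> \<gamma> \<le> \<delta> \<longrightarrow> \<delta> \<in> C)"

text \<open>I_C = {x : v(x) \<in> C}, where v(0) = infinity belongs to every cut.\<close>
definition I_cut :: "('k::field \<Rightarrow> 'g::linordered_ab_group_add) \<Rightarrow> 'g set \<Rightarrow> 'k set" where
  "I_cut v C = {x. x = 0 \<or> v x \<in> C}"

definition Delta_cut :: "'g::linordered_ab_group_add set \<Rightarrow> 'g set" where
  "Delta_cut C = {\<gamma>. (\<lambda>\<delta>. \<gamma> + \<delta>) ` C = C}"

text \<open>Units of O_Delta: {x : v(x) \<in> Delta} (v(0) = infinity is never in Delta).\<close>
definition O_units :: "('k::field \<Rightarrow> 'g::linordered_ab_group_add) \<Rightarrow> 'g set \<Rightarrow> 'k set" where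
  "O_units v \<Delta> = {x. x \<noteq> 0 \<and> v x \<in> \<Delta>}"

definition colon :: "'k::field set \<Rightarrow> 'k set \<Rightarrow> 'k set" where
  "colon I J = {x. \<forall>y\<in>J. x * y \<in> I}"

text \<open>n x n matrices are functions nat \<Rightarrow> nat \<Rightarrow> 'k, only entries with indices < n matter;
  vectors of K^n are functions nat \<Rightarrow> 'k vanishing outside {0..<n}.\<close>
definition mat_mult :: "nat \<Rightarrow> (nat \<Rightarrow> nat \<Rightarrow> 'k::field) \<Rightarrow> (nat \<Rightarrow> nat \<Rightarrow> 'k) \<Rightarrow> nat \<Rightarrow> nat \<Rightarrow> 'k" where
  "mat_mult n a b = (\<lambda>i k. \<Sum>j<n. a i j * b j k)"

definition mat_invertible :: "nat \<Rightarrow> (nat \<Rightarrow> nat \<Rightarrow> 'k::field) \<Rightarrow> bool" where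
  "mat_invertible n a \<longleftrightarrow> (\<exists>b. \<forall>i<n. \<forall>k<n.
      mat_mult n a b i k = (if i = k then 1 else 0) \<and> mat_mult n b a i k = (if i = k then 1 else 0))"

definition upper_triangular :: "nat \<Rightarrow> (nat \<Rightarrow> nat \<Rightarrow> 'k::field) \<Rightarrow> bool" where
  "upper_triangular n a \<longleftrightarrow> (\<forall>i<n. \<forall>j<n. j < i \<longrightarrow> a i j = 0)"

definition B_mat :: "nat \<Rightarrow> (nat \<Rightarrow> nat \<Rightarrow> 'k::field) set" where
  "B_mat n = {a. upper_triangular n a \<and> mat_invertible n a}"

definition mat_act :: "nat \<Rightarrow> (nat \<Rightarrow> nat \<Rightarrow> 'k::field) \<Rightarrow> (nat \<Rightarrow> 'k) \<Rightarrow> nat \<Rightarrow> 'k" where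
  "mat_act n a x = (\<lambda>i. if i < n then (\<Sum>j<n. a i j * x j) else 0)"

definition Lambda :: "('k::field \<Rightarrow> 'g::linordered_ab_group_add) \<Rightarrow> nat \<Rightarrow> (nat \<Rightarrow> 'g set) \<Rightarrow> (nat \<Rightarrow> 'k) set" where
  "Lambda v n C = {x. (\<forall>i<n. x i \<in> I_cut v (C i)) \<and> (\<forall>i\<ge>n. x i = 0)}"

definition Stab :: "nat \<Rightarrow> (nat \<Rightarrow> 'k::field) set \<Rightarrow> (nat \<Rightarrow> nat \<Rightarrow> 'k) set" where
  "Stab n L = {a \<in> B_mat n. mat_act n a ` L = L}"

end

theory Submission
  imports Defs
begin

lemma val_mult: "valuation v \<Longrightarrow> x \<noteq> 0 \<Longrightarrow> y \<noteq> 0 \<Longrightarrow> v (x * y) = v x + v y"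
  unfolding valuation_def by blast

lemma val_one: "valuation v \<Longrightarrow> v 1 = 0"
  using val_mult[of v 1 1] by simp

lemma val_minus_one: assumes "valuation v" shows "v (-1) = 0"
proof -
  have h: "v (-1) + v (-1) = 0" using val_mult[OF assms, of "-1" "-1"] val_one[OF assms] by simp
  show ?thesis
  proof (rule ccontr)
    assume "v (-1) \<noteq> 0"
    then have "v (-1) < 0 \<or> v (-1) > 0" by auto
    then show False using h add_pos_pos add_neg_neg by (metis less_irrefl)
  qed
qed

lemma val_neg: assumes "valuation v" "x \<noteq> 0" shows "v (- x) = v x"
  using val_mult[OF assms(1), of "-1" x] val_minus_one[OF assms(1)] assms(2) by simp

lemma val_inv: assumes "valuation v" "x \<noteq> 0" shows "v (inverse x) = - v x"
proof -
  have "v (x * inverse x) = v x + v (inverse x)" using val_mult[OF assms(1)] assms(2) by (simp del: right_inverse)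
  moreover have "x * inverse x = 1" using assms(2) by simp
  ultimately have "v x + v (inverse x) = 0" using val_one[OF assms(1)] by metis
  then show ?thesis by (simp add: eq_neg_iff_add_eq_0 add.commute)
qed

lemma I_zero: "0 \<in> I_cut v C" unfolding I_cut_def by simp

lemma I_add: assumes "valuation v" "is_cut C" "x \<in> I_cut v C" "y \<in> I_cut v C"
  shows "x + y \<in> I_cut v C"
proof (cases "x = 0 \<or> y = 0 \<or> x + y = 0")
  case True then show ?thesis using assms I_zero by auto
next
  case False
  then have "min (v x) (v y) \<le> v (x + y)" using assms(1) unfolding valuation_def by blast
  moreover have "min (v x) (v y) \<in> C" using assms(3,4) False unfolding I_cut_def min_def by auto
  ultimately show ?thesis using assms(2) unfolding is_cut_def I_cut_def by blast
qed

lemma I_neg: assumes "valuation v" "x \<in> I_cut v C" shows "- x \<in> I_cut v C"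
  using assms val_neg[OF assms(1), of x] unfolding I_cut_def by (cases "x = 0") auto

lemma I_sum: assumes "valuation v" "is_cut C" "\<forall>l\<in>S. f l \<in> I_cut v C"
  shows "sum f S \<in> I_cut v C"
  using assms(3)
proof (induction S rule: infinite_finite_induct)
  case (infinite A) then show ?case using I_zero by simp
next
  case empty then show ?case using I_zero by simp
next
  case (insert x F) then show ?case using I_add[OF assms(1,2)] by simp
qed

lemma I_delta: assumes "valuation v" "c \<noteq> 0" "v c \<in> Delta_cut C" "x \<in> I_cut v C"
  shows "c * x \<in> I_cut v C"
proof (cases "x = 0")
  case True then show ?thesis using I_zero by simp
next
  case False
  then have "v x \<in> C" using assms(4) unfolding I_cut_def by auto
  then have "v c + v x \<in> (\<lambda>\<delta>. v c + \<delta>) ` C" by blast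
  then have "v c + v x \<in> C" using assms(3) unfolding Delta_cut_def by simp
  then show ?thesis using val_mult[OF assms(1) assms(2) False] unfolding I_cut_def by simp
qed

lemma Delta_neg: assumes "\<gamma> \<in> Delta_cut C" shows "- \<gamma> \<in> Delta_cut C"
proof -
  have e: "(\<lambda>\<delta>. \<gamma> + \<delta>) ` C = C" using assms unfolding Delta_cut_def by simp
  have "(\<lambda>\<delta>. - \<gamma> + \<delta>) ` C = (\<lambda>\<delta>. - \<gamma> + \<delta>) ` ((\<lambda>\<delta>. \<gamma> + \<delta>) ` C)" using e by simp
  also have "\<dots> = C" by (simp add: image_image)
  finally show ?thesis unfolding Delta_cut_def by simp
qed

lemma row_split:
  fixes a :: "nat \<Rightarrow> nat \<Rightarrow> 'k::field"
  assumes "upper_triangular n a" "i < n"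
  shows "(\<Sum>j<n. a i j * x j) = a i i * x i + (\<Sum>j\<in>{Suc i..<n}. a i j * x j)"
proof -
  have "(\<Sum>j<n. a i j * x j) = (\<Sum>j\<in>{0..<i}. a i j * x j) + (\<Sum>j\<in>{i..<n}. a i j * x j)"
    using assms(2) by (simp add: lessThan_atLeast0 sum.atLeastLessThan_concat)
  moreover have "(\<Sum>j\<in>{0..<i}. a i j * x j) = 0"
    using assms unfolding upper_triangular_def by (intro sum.neutral) auto
  moreover have "(\<Sum>j\<in>{i..<n}. a i j * x j) = a i i * x i + (\<Sum>j\<in>{Suc i..<n}. a i j * x j)"
    using assms(2) by (simp add: sum.atLeast_Suc_lessThan)
  ultimately show ?thesis by simp
qed

lemma backsub:
  fixes a :: "nat \<Rightarrow> nat \<Rightarrow> 'k::field"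
  assumes "m \<le> n" "\<forall>j<m. a j j \<noteq> 0"
  shows "\<exists>x. (\<forall>j\<ge>m. x j = z j) \<and>
     (\<forall>j<m. a j j * x j + (\<Sum>l\<in>{Suc j..<n}. a j l * x l) = y j)"
proof -
  have "\<forall>k\<le>m. \<exists>x. (\<forall>j. j < m - k \<or> j \<ge> m \<longrightarrow> x j = z j) \<and>
     (\<forall>j. m - k \<le> j \<and> j < m \<longrightarrow> a j j * x j + (\<Sum>l\<in>{Suc j..<n}. a j l * x l) = y j)"
  proof (intro allI impI)
    fix k assume "k \<le> m"
    then show "\<exists>x. (\<forall>j. j < m - k \<or> j \<ge> m \<longrightarrow> x j = z j) \<and>
     (\<forall>j. m - k \<le> j \<and> j < m \<longrightarrow> a j j * x j + (\<Sum>l\<in>{Suc j..<n}. a j l * x l) = y j)"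
    proof (induction k)
      case 0 then show ?case by (intro exI[of _ z]) auto
    next
      case (Suc k)
      then obtain x where x1: "\<forall>j. j < m - k \<or> j \<ge> m \<longrightarrow> x j = z j"
        and x2: "\<forall>j. m - k \<le> j \<and> j < m \<longrightarrow> a j j * x j + (\<Sum>l\<in>{Suc j..<n}. a j l * x l) = y j"
        by auto
      define j0 where "j0 = m - Suc k"
      have j0: "j0 < m" "m - k = Suc j0" using Suc.prems unfolding j0_def by auto
      define S where "S = (\<Sum>l\<in>{Suc j0..<n}. a j0 l * x l)"
      define x' where "x' = x(j0 := inverse (a j0 j0) * (y j0 - S))"
      have S': "(\<Sum>l\<in>{Suc j..<n}. a j l * x' l) = (\<Sum>l\<in>{Suc j..<n}. a j l * x l)" if "j0 \<le> j" for j
        unfolding x'_def using that by (intro sum.cong) auto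
      show ?case
      proof (intro exI[of _ x'] conjI allI impI)
        fix j assume "j < m - Suc k \<or> m \<le> j"
        then show "x' j = z j" using x1 j0 unfolding x'_def j0_def by auto
      next
        fix j assume h: "m - Suc k \<le> j \<and> j < m"
        show "a j j * x' j + (\<Sum>l\<in>{Suc j..<n}. a j l * x' l) = y j"
        proof (cases "j = j0")
          case True
          have "a j0 j0 \<noteq> 0" using assms(2) j0 by simp
          then have "a j0 j0 * (inverse (a j0 j0) * (y j0 - S)) + S = y j0"
            by (simp add: mult.assoc[symmetric])
          then show ?thesis using S'[of j] True unfolding x'_def S_def by simp
        next
          case False
          then show ?thesis using S'[of j] x2 h j0 unfolding x'_def j0_def by auto
        qed
      qed
    qed
  qed
  from this[rule_format, of m] show ?thesis by auto
qed


lemma diag_nonzero: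
  fixes a :: "nat \<Rightarrow> nat \<Rightarrow> 'k::field"
  assumes "a \<in> B_mat n" "k < n"
  shows "a k k \<noteq> 0"
proof (rule ccontr)
  assume "\<not> a k k \<noteq> 0"
  then have ex: "\<exists>k. k < n \<and> a k k = 0" using assms by auto
  define k0 where "k0 = (LEAST k. k < n \<and> a k k = 0)"
  have k0: "k0 < n" "a k0 k0 = 0" using LeastI_ex[OF ex] unfolding k0_def by auto
  have below: "\<forall>j<k0. a j j \<noteq> 0"
  proof (intro allI impI)
    fix j assume "j < k0"
    then have "\<not> (j < n \<and> a j j = 0)" using not_less_Least[of j "\<lambda>k. k < n \<and> a k k = 0"] unfolding k0_def by blast
    then show "a j j \<noteq> 0" using \<open>j < k0\<close> k0 by simp
  qed
  have ut: "upper_triangular n a" using assms(1) unfolding B_mat_def by simp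
  obtain x where x1: "\<forall>j\<ge>k0. x j = (if j = k0 then 1 else 0)"
    and x2: "\<forall>j<k0. a j j * x j + (\<Sum>l\<in>{Suc j..<n}. a j l * x l) = (0::'k)"
    using backsub[of k0 n a "\<lambda>j. if j = k0 then 1 else 0" "\<lambda>_. 0"] k0 below by auto
  have ker: "(\<Sum>j<n. a i j * x j) = 0" if "i < n" for i
  proof (cases "i < k0")
    case True then show ?thesis using row_split[OF ut that] x2 by simp
  next
    case False
    have "(\<Sum>l\<in>{Suc i..<n}. a i l * x l) = 0" using x1 False by (intro sum.neutral) auto
    then show ?thesis using row_split[OF ut that] x1 False k0 by auto
  qed
  obtain b where b: "\<forall>i<n. \<forall>k<n. mat_mult n b a i k = (if i = k then 1 else 0)"
    using assms(1) unfolding B_mat_def mat_invertible_def by blast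
  have "(\<Sum>l<n. b k0 l * (\<Sum>j<n. a l j * x j)) = 0" using ker by simp
  moreover have "(\<Sum>l<n. b k0 l * (\<Sum>j<n. a l j * x j)) = (\<Sum>j<n. mat_mult n b a k0 j * x j)"
  proof -
    have "(\<Sum>l<n. b k0 l * (\<Sum>j<n. a l j * x j)) = (\<Sum>l<n. \<Sum>j<n. b k0 l * a l j * x j)"
      by (simp add: sum_distrib_left mult.assoc)
    also have "\<dots> = (\<Sum>j<n. \<Sum>l<n. b k0 l * a l j * x j)" by (rule sum.swap)
    also have "\<dots> = (\<Sum>j<n. mat_mult n b a k0 j * x j)"
      unfolding mat_mult_def by (simp add: sum_distrib_right)
    finally show ?thesis .
  qed
  moreover have "(\<Sum>j<n. mat_mult n b a k0 j * x j) = (\<Sum>j<n. (if k0 = j then x j else 0))"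
    using b k0 by (intro sum.cong) auto
  moreover have "\<dots> = 1" using k0 x1 by simp
  ultimately show False by simp
qed

lemma uniq:
  fixes a :: "nat \<Rightarrow> nat \<Rightarrow> 'k::field"
  assumes ut: "upper_triangular n a" and nz: "\<forall>j<n. a j j \<noteq> 0"
    and rows: "\<forall>k. i < k \<and> k < n \<longrightarrow> (\<Sum>j<n. a k j * x j) = 0"
  shows "i < j \<Longrightarrow> j < n \<Longrightarrow> x j = 0"
proof (induction "n - j" arbitrary: j rule: less_induct)
  case less
  have "(\<Sum>l\<in>{Suc j..<n}. a j l * x l) = 0"
    using less by (intro sum.neutral) auto
  then have "a j j * x j = 0" using row_split[OF ut less.prems(2), of x] rows less.prems by simp
  then show ?case using nz less.prems by simp
qed


theorem proposition3p5:
  fixes v :: "'k::field \<Rightarrow> 'g::linordered_ab_group_add"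
    and n :: nat and C :: "nat \<Rightarrow> 'g set" and a :: "nat \<Rightarrow> nat \<Rightarrow> 'k"
  assumes "valuation v"
    and "\<forall>i<n. is_cut (C i)"
    and "a \<in> B_mat n"
  shows "a \<in> Stab n (Lambda v n C) \<longleftrightarrow>
         ((\<forall>i<n. a i i \<in> O_units v (Delta_cut (C i))) \<and>
          (\<forall>i j. i < j \<longrightarrow> j < n \<longrightarrow> a i j \<in> colon (I_cut v (C i)) (I_cut v (C j))))"
proof -
  note val = assms(1)
  have ut: "upper_triangular n a" using assms(3) unfolding B_mat_def by simp
  have nz: "\<forall>j<n. a j j \<noteq> 0" using diag_nonzero[OF assms(3)] by blast
  have surjv: "\<exists>y. y \<noteq> 0 \<and> v y = \<delta>" for \<delta> using val unfolding valuation_def by blast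
  show ?thesis
  proof
    assume st: "a \<in> Stab n (Lambda v n C)"
    then have eq: "mat_act n a ` Lambda v n C = Lambda v n C" unfolding Stab_def by simp
    define e where "e (i::nat) y = (\<lambda>j::nat. if j = i then y else (0::'k))" for i y
    have eL: "e i y \<in> Lambda v n C" if "i < n" "y \<in> I_cut v (C i)" for i y
      using that I_zero unfolding e_def Lambda_def by auto
    have act_e: "mat_act n a (e i y) k = a k i * y" if "k < n" "i < n" for i y k
      using that unfolding mat_act_def e_def by (simp add: if_distrib sum.delta cong: if_cong)
    have img: "mat_act n a x \<in> Lambda v n C" if "x \<in> Lambda v n C" for x
      using eq that by blast
    have key: "a k i * y \<in> I_cut v (C k)" if "k < n" "i < n" "y \<in> I_cut v (C i)" for k i y
      using img[OF eL[OF that(2,3)]] act_e[OF that(1,2), of y] that(1) unfolding Lambda_def by auto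
    show "(\<forall>i<n. a i i \<in> O_units v (Delta_cut (C i))) \<and>
          (\<forall>i j. i < j \<longrightarrow> j < n \<longrightarrow> a i j \<in> colon (I_cut v (C i)) (I_cut v (C j)))"
    proof (intro conjI allI impI)
      fix i j :: nat assume "i < j" "j < n"
      then show "a i j \<in> colon (I_cut v (C i)) (I_cut v (C j))"
        using key unfolding colon_def by auto
    next
      fix i assume i: "i < n"
      have ai: "a i i \<noteq> 0" using nz i by simp
      have "(\<lambda>\<delta>. v (a i i) + \<delta>) ` C i = C i"
      proof
        show "(\<lambda>\<delta>. v (a i i) + \<delta>) ` C i \<subseteq> C i"
        proof
          fix d assume "d \<in> (\<lambda>\<delta>. v (a i i) + \<delta>) ` C i"
          then obtain \<delta> where d: "d = v (a i i) + \<delta>" "\<delta> \<in> C i" by blast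
          obtain y where y: "y \<noteq> 0" "v y = \<delta>" using surjv by blast
          have "y \<in> I_cut v (C i)" using y d unfolding I_cut_def by simp
          then have "a i i * y \<in> I_cut v (C i)" using key i by blast
          moreover have "a i i * y \<noteq> 0" using ai y by simp
          ultimately have "v (a i i * y) \<in> C i" unfolding I_cut_def by simp
          then show "d \<in> C i" using val_mult[OF val ai y(1)] y d by simp
        qed
      next
        show "C i \<subseteq> (\<lambda>\<delta>. v (a i i) + \<delta>) ` C i"
        proof
          fix \<delta> assume d: "\<delta> \<in> C i"
          obtain y where y: "y \<noteq> 0" "v y = \<delta>" using surjv by blast
          have "y \<in> I_cut v (C i)" using y d unfolding I_cut_def by simp
          then have "e i y \<in> mat_act n a ` Lambda v n C" using eL i eq by simp
          then obtain x where x0: "e i y = mat_act n a x" "x \<in> Lambda v n C" by (rule imageE)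
          have x: "x \<in> Lambda v n C" "mat_act n a x = e i y" using x0 by simp_all
          have rows: "\<forall>k. i < k \<and> k < n \<longrightarrow> (\<Sum>j<n. a k j * x j) = 0"
          proof (intro allI impI)
            fix k assume "i < k \<and> k < n"
            then show "(\<Sum>j<n. a k j * x j) = 0"
              using fun_cong[OF x(2), of k] unfolding mat_act_def e_def by auto
          qed
          have z: "x j = 0" if "i < j" "j < n" for j
            using uniq[OF ut nz rows that] .
          have "(\<Sum>l\<in>{Suc i..<n}. a i l * x l) = 0" using z by (intro sum.neutral) auto
          moreover have "(\<Sum>j<n. a i j * x j) = y"
            using fun_cong[OF x(2), of i] i unfolding mat_act_def e_def by auto
          ultimately have axy: "a i i * x i = y" using row_split[OF ut i, of x] by simp
          then have xi: "x i \<noteq> 0" using y by auto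
          then have "v (x i) \<in> C i" using x(1) i unfolding Lambda_def I_cut_def by auto
          moreover have "\<delta> = v (a i i) + v (x i)" using val_mult[OF val ai xi] axy y by simp
          ultimately show "\<delta> \<in> (\<lambda>\<delta>. v (a i i) + \<delta>) ` C i" by blast
        qed
      qed
      then show "a i i \<in> O_units v (Delta_cut (C i))"
        using ai unfolding O_units_def Delta_cut_def by simp
    qed
  next
    assume h: "(\<forall>i<n. a i i \<in> O_units v (Delta_cut (C i))) \<and>
          (\<forall>i j. i < j \<longrightarrow> j < n \<longrightarrow> a i j \<in> colon (I_cut v (C i)) (I_cut v (C j)))"
    have dg: "v (a i i) \<in> Delta_cut (C i)" if "i < n" for i using h that unfolding O_units_def by simp
    have cl: "a i j * y \<in> I_cut v (C i)" if "i < j" "j < n" "y \<in> I_cut v (C j)" for i j y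
      using h that unfolding colon_def by blast
    have S_in: "(\<Sum>l\<in>{Suc i..<n}. a i l * x l) \<in> I_cut v (C i)"
      if "i < n" "\<forall>l. i < l \<and> l < n \<longrightarrow> x l \<in> I_cut v (C l)" for i x
      using that assms(2) by (intro I_sum[OF val]) (auto intro: cl)
    have sub: "mat_act n a x \<in> Lambda v n C" if x: "x \<in> Lambda v n C" for x
    proof -
      have "mat_act n a x i \<in> I_cut v (C i)" if i: "i < n" for i
      proof -
        have "mat_act n a x i = a i i * x i + (\<Sum>l\<in>{Suc i..<n}. a i l * x l)"
          using row_split[OF ut i] i unfolding mat_act_def by simp
        moreover have "a i i * x i \<in> I_cut v (C i)"
          using I_delta[OF val _ dg[OF i]] nz i x unfolding Lambda_def by simp
        moreover have "(\<Sum>l\<in>{Suc i..<n}. a i l * x l) \<in> I_cut v (C i)"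
          using S_in[OF i] x unfolding Lambda_def by simp
        ultimately show ?thesis using I_add[OF val] assms(2) i by simp
      qed
      then show ?thesis unfolding Lambda_def mat_act_def by simp
    qed
    have sup: "y \<in> mat_act n a ` Lambda v n C" if y: "y \<in> Lambda v n C" for y
    proof -
      obtain x where x1: "\<forall>j\<ge>n. x j = 0"
        and x2: "\<forall>j<n. a j j * x j + (\<Sum>l\<in>{Suc j..<n}. a j l * x l) = y j"
        using backsub[of n n a "\<lambda>_. 0" y] nz by auto
      have xin: "j < n \<Longrightarrow> x j \<in> I_cut v (C j)" for j
      proof (induction "n - j" arbitrary: j rule: less_induct)
        case less
        have S: "(\<Sum>l\<in>{Suc j..<n}. a j l * x l) \<in> I_cut v (C j)"
        proof (rule S_in[OF less.prems], intro allI impI)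
          fix l assume "j < l \<and> l < n"
          then have "n - l < n - j" by arith
          then show "x l \<in> I_cut v (C l)" using less.hyps[of l] \<open>j < l \<and> l < n\<close> by blast
        qed
        have yj: "y j \<in> I_cut v (C j)" using y less.prems unfolding Lambda_def by simp
        have "y j - (\<Sum>l\<in>{Suc j..<n}. a j l * x l) \<in> I_cut v (C j)"
          using I_add[OF val _ yj I_neg[OF val S]] assms(2) less.prems by simp
        moreover have "x j = inverse (a j j) * (y j - (\<Sum>l\<in>{Suc j..<n}. a j l * x l))"
          using x2 nz less.prems by (simp add: field_simps)
        moreover have "v (inverse (a j j)) \<in> Delta_cut (C j)"
          using val_inv[OF val] nz less.prems Delta_neg[OF dg[OF less.prems]] by simp
        ultimately show ?case using I_delta[OF val] nz less.prems by simp
      qed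
      have xL: "x \<in> Lambda v n C" using xin x1 unfolding Lambda_def by simp
      have "mat_act n a x = y"
      proof
        fix i show "mat_act n a x i = y i"
        proof (cases "i < n")
          case True then show ?thesis using row_split[OF ut True, of x] x2 unfolding mat_act_def by simp
        next
          case False then show ?thesis using y unfolding mat_act_def Lambda_def by simp
        qed
      qed
      then show ?thesis using xL by blast
    qed
    have "mat_act n a ` Lambda v n C = Lambda v n C" using sub sup by blast
    then show "a \<in> Stab n (Lambda v n C)" using assms(3) unfolding Stab_def by simp
  qed
qed

end
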